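(* Let $\mathcal H$ be the $5$-uniform hypergraph defined below and let $e,f$ be two edges of $\mathcal H$. Then every monomorphism $\phi : V(\mathcal{H}_{ef}) \to V(\mathcal{H})$ is the identity.
   Context: $\mathcal{H}$ has vertex set $\{z, v_1,\dots,v_9\}$ and edges $r=\{z,v_1,v_3,v_5,v_8\}$, $g=\{z,v_2,v_4,v_7,v_9\}$, $a=\{v_1,v_4,v_6,v_8,v_9\}$, $b=\{v_9,v_1,v_2,v_3,v_4\}$, and $e_i=\{v_i,v_{i+1},v_{i+2},v_{i+3},v_{i+4}\}$ for $i=1,\dots,5$. $\mathcal{H}_{ef}$ is the hypergraph with edge set $E(\mathcal H)\setminus\{e,f\}$, and $V(\mathcal H_{ef})$ is the union of its edges. A monomorphism $\phi: V(\mathcal{H}_{ef})\to V(\mathcal{H})$ is an injective map such that $\{\phi(y): y\in x\}$ is an edge of $\mathcal H$ for every edge $x$ of $\mathcal H_{ef}$; "identity" means $\phi(y)=y$ for all $y\in V(\mathcal H_{ef})$. *)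

theory Defs
  imports Main
begin

text \<open>Vertices are encoded as natural numbers: z = 0 and v_i = i for i = 1..9.\<close>

definition vz :: nat where "vz = 0"

definition edge_r :: "nat set" where "edge_r = {vz, 1, 3, 5, 8}"
definition edge_g :: "nat set" where "edge_g = {vz, 2, 4, 7, 9}"
definition edge_a :: "nat set" where "edge_a = {1, 4, 6, 8, 9}"
definition edge_b :: "nat set" where "edge_b = {9, 1, 2, 3, 4}"
definition edge_e :: "nat \<Rightarrow> nat set" where "edge_e i = {i, i+1, i+2, i+3, i+4}"

definition H_edges :: "nat set set" where
  "H_edges = {edge_r, edge_g, edge_a, edge_b} \<union> edge_e ` {1..5}"

definition H_vertices :: "nat set" where
  "H_vertices = insert vz {1..9}"

definition Hef_edges :: "nat set \<Rightarrow> nat set \<Rightarrow> nat set set" where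
  "Hef_edges e f = H_edges - {e, f}"

definition Hef_vertices :: "nat set \<Rightarrow> nat set \<Rightarrow> nat set" where
  "Hef_vertices e f = \<Union> (Hef_edges e f)"

definition monomorphism_Hef :: "nat set \<Rightarrow> nat set \<Rightarrow> (nat \<Rightarrow> nat) \<Rightarrow> bool" where
  "monomorphism_Hef e f \<phi> \<longleftrightarrow>
     inj_on \<phi> (Hef_vertices e f) \<and> \<phi> ` Hef_vertices e f \<subseteq> H_vertices \<and>
     (\<forall>x \<in> Hef_edges e f. \<phi> ` x \<in> H_edges)"

end

theory Submission
  imports Defs
begin

definition HL :: "nat list list" where
  "HL = [[0,1,3,5,8],[0,2,4,7,9],[1,4,6,8,9],[9,1,2,3,4],[1,2,3,4,5],[2,3,4,5,6],[3,4,5,6,7],[4,5,6,7,8],[5,6,7,8,9]]"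

definition HS :: "nat \<Rightarrow> nat set" where "HS k = set (HL ! k)"

lemma HS_vals: "HS 0 = edge_r" "HS 1 = edge_g" "HS 2 = edge_a" "HS 3 = edge_b"
  "HS 4 = edge_e 1" "HS 5 = edge_e 2" "HS 6 = edge_e 3" "HS 7 = edge_e 4" "HS 8 = edge_e 5"
  by (auto simp: HS_def HL_def edge_r_def edge_g_def edge_a_def edge_b_def edge_e_def vz_def)

lemma H_edges_HS: "H_edges = HS ` {..<9}"
proof -
  have "{..<9::nat} = {0,1,2,3,4,5,6,7,8}" by auto
  moreover have "{1..5::nat} = {1,2,3,4,5}" by auto
  ultimately show ?thesis
    using HS_vals(2) by (simp add: H_edges_def HS_vals insert_commute)
qed

lemma sm_inj: "list_all (\<lambda>a. list_all (\<lambda>b. sum_list (HL ! a) = sum_list (HL ! b) \<longrightarrow> a = b) [0..<9]) [0..<9]"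
  by code_simp

lemma HL_distinct: "k < 9 \<Longrightarrow> distinct (HL ! k)"
proof -
  assume "k < 9"
  then have "k \<in> {0,1,2,3,4,5,6,7,8}" by auto
  then show ?thesis by (auto simp: HL_def)
qed

definition ic :: "nat \<Rightarrow> nat \<Rightarrow> nat" where
  "ic a b = length (filter (\<lambda>x. x \<in> set (HL ! b)) (HL ! a))"

lemma HS_inj: "inj_on HS {..<9}"
proof (rule inj_onI)
  fix a b assume a: "a \<in> {..<9}" and b: "b \<in> {..<9}" and e: "HS a = HS b"
  have "sum_list (HL ! a) = sum_list (HL ! b)"
    using e HL_distinct[of a] HL_distinct[of b] a b sum_list_distinct_conv_sum_set[of "HL ! a" id] sum_list_distinct_conv_sum_set[of "HL ! b" id]
    by (simp add: HS_def)
  then show "a = b" using sm_inj a b by (auto simp: list_all_iff)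
qed

lemma ic_card: "a < 9 \<Longrightarrow> ic a b = card (HS a \<inter> HS b)"
proof -
  assume "a < 9"
  then have d: "distinct (HL ! a)" by (rule HL_distinct)
  have "card (set (filter (\<lambda>x. x \<in> set (HL ! b)) (HL ! a))) = length (filter (\<lambda>x. x \<in> set (HL ! b)) (HL ! a))"
    using d by (intro distinct_card) simp
  moreover have "set (filter (\<lambda>x. x \<in> set (HL ! b)) (HL ! a)) = HS a \<inter> HS b"
    by (auto simp: HS_def)
  ultimately show ?thesis by (simp add: ic_def)
qed

definition icT :: "nat list list" where
  "icT = [[5,1,2,2,3,2,2,2,2], [1,5,2,3,2,2,2,2,2], [2,2,5,3,2,2,2,3,3], [2,3,3,5,4,3,2,1,1], [3,2,2,4,5,4,3,2,1], [2,2,2,3,4,5,4,3,2], [2,2,2,2,3,4,5,4,3], [2,2,3,1,2,3,4,5,4], [2,2,3,1,1,2,3,4,5]]"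

lemma ic_tab: "list_all (\<lambda>a. list_all (\<lambda>b. ic a b = icT ! a ! b) [0..<9]) [0..<9]"
  by code_simp

lemma ic_icT: "a < 9 \<Longrightarrow> b < 9 \<Longrightarrow> ic a b = icT ! a ! b"
  using ic_tab by (simp add: list_all_iff)

fun esrch :: "nat list \<Rightarrow> nat list \<Rightarrow> nat list \<Rightarrow> nat list list" where
  "esrch ks ts [] = [ts]"
| "esrch ks ts (r # rs) = concat (map (\<lambda>t. esrch (ks @ [r]) (ts @ [t]) rs)
      (filter (\<lambda>t. t \<notin> set ts \<and> list_all (\<lambda>(k, u). icT ! t ! u = icT ! r ! k) (zip ks ts)) [0..<9]))"

lemma esrch_complete:
  assumes "distinct (ks @ rs)"
    and "\<And>a b. a \<in> set (ks @ rs) \<Longrightarrow> b \<in> set (ks @ rs) \<Longrightarrow> ic (\<tau> a) (\<tau> b) = ic a b"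
    and "inj_on \<tau> (set (ks @ rs))"
    and "\<And>a. a \<in> set (ks @ rs) \<Longrightarrow> \<tau> a < 9"
    and "\<And>a. a \<in> set (ks @ rs) \<Longrightarrow> a < 9"
  shows "map \<tau> (ks @ rs) \<in> set (esrch ks (map \<tau> ks) rs)"
  using assms
proof (induction rs arbitrary: ks)
  case Nil
  then show ?case by simp
next
  case (Cons r rs)
  have r1: "\<tau> r \<notin> set (map \<tau> ks)"
    using Cons.prems(1,3) by (auto simp: inj_on_def)
  have r2: "list_all (\<lambda>(k, u). icT ! (\<tau> r) ! u = icT ! r ! k) (zip ks (map \<tau> ks))"
  proof -
    have z: "zip xs (map \<tau> xs) = map (\<lambda>x. (x, \<tau> x)) xs" for xs :: "nat list"
      by (induction xs) auto
    have "icT ! (\<tau> r) ! (\<tau> k) = icT ! r ! k" if k: "k \<in> set ks" for k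
      using Cons.prems(2)[of r k] Cons.prems(4)[of r] Cons.prems(4)[of k] Cons.prems(5)[of r] Cons.prems(5)[of k] k
        ic_icT[of "\<tau> r" "\<tau> k"] ic_icT[of r k] by simp
    then show ?thesis by (auto simp: list_all_iff z)
  qed
  have r4: "\<tau> r \<in> set [0..<9]" using Cons.prems(4) by simp
  have IH: "map \<tau> ((ks @ [r]) @ rs) \<in> set (esrch (ks @ [r]) (map \<tau> (ks @ [r])) rs)"
    using Cons.prems by (intro Cons.IH) auto
  show ?case
    using IH r1 r2 r4 by (auto simp del: upt_Suc)
qed

definition esOf :: "nat \<Rightarrow> nat \<Rightarrow> nat list" where
  "esOf i j = filter (\<lambda>k. k \<noteq> i \<and> k \<noteq> j) [0..<9]"

definition cand :: "nat list \<Rightarrow> nat list \<Rightarrow> nat \<Rightarrow> nat \<Rightarrow> bool" where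
  "cand es s v w = list_all (\<lambda>q. (w \<in> set (HL ! (s ! q))) = (v \<in> set (HL ! (es ! q)))) [0..<length es]"

definition vcheck :: "nat list \<Rightarrow> nat list \<Rightarrow> bool" where
  "vcheck es s = (let VL = concat (map (\<lambda>k. HL ! k) es) in
     list_ex (\<lambda>v. list_all (\<lambda>w. \<not> cand es s v w) [0..<10]) VL \<or>
     list_all (\<lambda>v. list_all (\<lambda>w. cand es s v w \<longrightarrow> w = v) [0..<10]) VL)"

definition Qp :: "nat \<Rightarrow> nat \<Rightarrow> bool" where
  "Qp i j = list_all (vcheck (esOf i j)) (esrch [] [] (esOf i j))"

lemma comp_0_1: "Qp 0 1"
  unfolding Qp_def by code_simp

lemma comp_0_2: "Qp 0 2"
  unfolding Qp_def by code_simp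

lemma comp_0_3: "Qp 0 3"
  unfolding Qp_def by code_simp

lemma comp_0_4: "Qp 0 4"
  unfolding Qp_def by code_simp

lemma comp_0_5: "Qp 0 5"
  unfolding Qp_def by code_simp

lemma comp_0_6: "Qp 0 6"
  unfolding Qp_def by code_simp

lemma comp_0_7: "Qp 0 7"
  unfolding Qp_def by code_simp

lemma comp_0_8: "Qp 0 8"
  unfolding Qp_def by code_simp

lemma comp_1_2: "Qp 1 2"
  unfolding Qp_def by code_simp

lemma comp_1_3: "Qp 1 3"
  unfolding Qp_def by code_simp

lemma comp_1_4: "Qp 1 4"
  unfolding Qp_def by code_simp

lemma comp_1_5: "Qp 1 5"
  unfolding Qp_def by code_simp

lemma comp_1_6: "Qp 1 6"
  unfolding Qp_def by code_simp

lemma comp_1_7: "Qp 1 7"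
  unfolding Qp_def by code_simp

lemma comp_1_8: "Qp 1 8"
  unfolding Qp_def by code_simp

lemma comp_2_3: "Qp 2 3"
  unfolding Qp_def by code_simp

lemma comp_2_4: "Qp 2 4"
  unfolding Qp_def by code_simp

lemma comp_2_5: "Qp 2 5"
  unfolding Qp_def by code_simp

lemma comp_2_6: "Qp 2 6"
  unfolding Qp_def by code_simp

lemma comp_2_7: "Qp 2 7"
  unfolding Qp_def by code_simp

lemma comp_2_8: "Qp 2 8"
  unfolding Qp_def by code_simp

lemma comp_3_4: "Qp 3 4"
  unfolding Qp_def by code_simp

lemma comp_3_5: "Qp 3 5"
  unfolding Qp_def by code_simp

lemma comp_3_6: "Qp 3 6"
  unfolding Qp_def by code_simp

lemma comp_3_7: "Qp 3 7"
  unfolding Qp_def by code_simp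

lemma comp_3_8: "Qp 3 8"
  unfolding Qp_def by code_simp

lemma comp_4_5: "Qp 4 5"
  unfolding Qp_def by code_simp

lemma comp_4_6: "Qp 4 6"
  unfolding Qp_def by code_simp

lemma comp_4_7: "Qp 4 7"
  unfolding Qp_def by code_simp

lemma comp_4_8: "Qp 4 8"
  unfolding Qp_def by code_simp

lemma comp_5_6: "Qp 5 6"
  unfolding Qp_def by code_simp

lemma comp_5_7: "Qp 5 7"
  unfolding Qp_def by code_simp

lemma comp_5_8: "Qp 5 8"
  unfolding Qp_def by code_simp

lemma comp_6_7: "Qp 6 7"
  unfolding Qp_def by code_simp

lemma comp_6_8: "Qp 6 8"
  unfolding Qp_def by code_simp

lemma comp_7_8: "Qp 7 8"
  unfolding Qp_def by code_simp

lemma computed: "i < 9 \<Longrightarrow> j < 9 \<Longrightarrow> i < j \<Longrightarrow> list_all (vcheck (esOf i j)) (esrch [] [] (esOf i j))"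
proof -
  assume a: "i < 9" "j < 9" "i < j"
  have "Qp i j"
    using a comp_0_1 comp_0_2 comp_0_3 comp_0_4 comp_0_5 comp_0_6 comp_0_7 comp_0_8 comp_1_2 comp_1_3 comp_1_4 comp_1_5 comp_1_6 comp_1_7 comp_1_8 comp_2_3 comp_2_4 comp_2_5 comp_2_6 comp_2_7 comp_2_8 comp_3_4 comp_3_5 comp_3_6 comp_3_7 comp_3_8 comp_4_5 comp_4_6 comp_4_7 comp_4_8 comp_5_6 comp_5_7 comp_5_8 comp_6_7 comp_6_8 comp_7_8 by (auto simp: less_Suc_eq numeral_eq_Suc)
  then show ?thesis by (simp only: Qp_def)
qed

theorem lemma4p12:
  fixes e f :: "nat set" and \<phi> :: "nat \<Rightarrow> nat"
  assumes "e \<in> H_edges" and "f \<in> H_edges" and "e \<noteq> f"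
    and "monomorphism_Hef e f \<phi>"
  shows "\<forall>y \<in> Hef_vertices e f. \<phi> y = y"
proof -
  from assms(1) obtain i where i: "i < 9" "e = HS i" using H_edges_HS by auto
  from assms(2) obtain j where j: "j < 9" "f = HS j" using H_edges_HS by auto
  have ij: "i \<noteq> j" using assms(3) i j by auto
  define es where "es = esOf i j"
  have ses: "set es = {k. k < 9 \<and> k \<noteq> i \<and> k \<noteq> j}" by (auto simp: es_def esOf_def)
  have des: "distinct es" by (simp add: es_def esOf_def)
  have Hef: "Hef_edges e f = HS ` set es"
  proof -
    have "HS ` {..<9} - {HS i, HS j} = HS ` {k. k < 9 \<and> k \<noteq> i \<and> k \<noteq> j}"
      using HS_inj i j by (auto simp: inj_on_eq_iff)
    then show ?thesis unfolding Hef_edges_def H_edges_HS ses i j by simp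
  qed
  define V where "V = Hef_vertices e f"
  have V: "V = \<Union> (HS ` set es)" by (simp add: V_def Hef_vertices_def Hef)
  have inj: "inj_on \<phi> V" and rng: "\<phi> ` V \<subseteq> H_vertices"
    and edg: "\<And>k. k \<in> set es \<Longrightarrow> \<phi> ` HS k \<in> H_edges"
    using assms(4) unfolding monomorphism_Hef_def V_def Hef by auto
  define \<tau> where "\<tau> k = (SOME t. t < 9 \<and> \<phi> ` HS k = HS t)" for k
  have \<tau>: "\<tau> k < 9 \<and> \<phi> ` HS k = HS (\<tau> k)" if kes: "k \<in> set es" for k
  proof -
    obtain t where "t \<in> {..<9}" "\<phi> ` HS k = HS t"
      using edg[OF kes] unfolding H_edges_HS by blast
    then have "\<exists>t. t < 9 \<and> \<phi> ` HS k = HS t" by auto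
    then show ?thesis unfolding \<tau>_def by (rule someI_ex)
  qed
  have sub: "HS k \<subseteq> V" if "k \<in> set es" for k using that V by auto
  have tinj: "inj_on \<tau> (set es)"
  proof (rule inj_onI)
    fix a b assume a: "a \<in> set es" and b: "b \<in> set es" and e: "\<tau> a = \<tau> b"
    then have "\<phi> ` HS a = \<phi> ` HS b" using \<tau>[OF a] \<tau>[OF b] by simp
    then have "HS a = HS b" using inj_on_image_eq_iff[OF inj sub[OF a] sub[OF b]] by simp
    then show "a = b" using HS_inj a b ses by (auto simp: inj_on_eq_iff)
  qed
  have tic: "ic (\<tau> a) (\<tau> b) = ic a b" if a: "a \<in> set es" and b: "b \<in> set es" for a b
  proof -
    have "ic (\<tau> a) (\<tau> b) = card (HS (\<tau> a) \<inter> HS (\<tau> b))" using ic_card \<tau>[OF a] by simp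
    also have "\<dots> = card (\<phi> ` HS a \<inter> \<phi> ` HS b)" using \<tau>[OF a] \<tau>[OF b] by simp
    also have "\<dots> = card (\<phi> ` (HS a \<inter> HS b))"
      using inj_on_image_Int[OF inj sub[OF a] sub[OF b]] by simp
    also have "\<dots> = card (HS a \<inter> HS b)"
      using sub[OF a] by (intro card_image inj_on_subset[OF inj]) auto
    also have "\<dots> = ic a b" using ic_card a ses by simp
    finally show ?thesis .
  qed
  have mem0: "map \<tau> ([] @ es) \<in> set (esrch [] (map \<tau> []) es)"
  proof (rule esrch_complete)
    show "distinct ([] @ es)" using des by simp
    show "inj_on \<tau> (set ([] @ es))" using tinj by simp
  next
    fix a b assume "a \<in> set ([] @ es)" "b \<in> set ([] @ es)"
    then show "ic (\<tau> a) (\<tau> b) = ic a b" using tic by simp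
  next
    fix a assume "a \<in> set ([] @ es)"
    then have a: "a \<in> set es" by simp
    show "\<tau> a < 9" using \<tau>[OF a] by simp
    show "a < 9" using a unfolding ses by simp
  qed
  have mem: "map \<tau> es \<in> set (esrch [] [] es)"
    using mem0 by (simp only: append_Nil list.map(1))
  have cij: "list_all (vcheck (esOf i j)) (esrch [] [] (esOf i j))"
  proof (cases "i < j")
    case True
    then show ?thesis using computed i(1) j(1) by blast
  next
    case False
    then have ji: "j < i" using ij by simp
    have "esOf i j = esOf j i" unfolding esOf_def by (rule filter_cong) auto
    then show ?thesis using computed[OF j(1) i(1) ji] by simp
  qed
  have vc: "vcheck es (map \<tau> es)"
    using cij mem unfolding es_def by (auto simp: list_all_iff)
  have cphi: "cand es (map \<tau> es) v (\<phi> v)" if v: "v \<in> V" for v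
    unfolding cand_def list_all_iff
  proof
    fix q assume "q \<in> set [0..<length es]"
    then have q: "q < length es" by simp
    define k where "k = es ! q"
    have k: "k \<in> set es" using q by (simp add: k_def)
    have "(\<phi> v \<in> set (HL ! (map \<tau> es ! q))) = (\<phi> v \<in> \<phi> ` HS k)"
      using q \<tau>[OF k] by (simp add: k_def HS_def)
    also have "\<dots> = (v \<in> HS k)" using inj_on_image_mem_iff[OF inj v sub[OF k]] .
    finally show "(\<phi> v \<in> set (HL ! (map \<tau> es ! q))) = (v \<in> set (HL ! (es ! q)))"
      by (simp add: k_def HS_def)
  qed
  have lt: "\<phi> v < 10" if "v \<in> V" for v
    using rng that by (auto simp: H_vertices_def vz_def)
  have VL: "set (concat (map (\<lambda>k. HL ! k) es)) = V" by (auto simp: V HS_def)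
  show ?thesis
    using vc cphi lt unfolding vcheck_def Let_def list_ex_iff list_all_iff VL V_def[symmetric]
    by fastforce
qed

end
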